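(* Let $I$ be a BPPS instance with $d$ scenarios and let $\mathcal{B}$ be a minimal solution for $I$. Then $\mathrm{val}_{VBPP}(\mathcal{B})\le\sqrt{d}\,\mathrm{val}_{BPPS}(\mathcal{B})$, where $\mathrm{val}_{VBPP}(\mathcal{B})=|\mathcal{B}|$.
   Context: BPPS: given a number $d$ of scenarios, a set $\mathcal{I}=\{1,\dots,n\}$ of items, each item $i$ having a size $s_i\in\mathbb{Q}_+$ and a set of scenarios $\mathcal{K}_i\subseteq\{1,\dots,d\}$, and unlimited identical bins of capacity $1$ (instances are normalized so that the capacity is $1$). For each scenario $k$, $S_k=\{i\in\mathcal{I}: k\in\mathcal{K}_i\}$. A solution is a partition $\mathcal{B}$ of $\mathcal{I}$ (into nonempty parts, called bins) such that for every $B\in\mathcal{B}$ and every scenario $k$, $\sum_{i\in B\cap S_k}s_i\le 1$. Its value is $\mathrm{val}_{BPPS}(\mathcal{B})=\max_{k\in[d]}|\{B\in\mathcal{B}: B\cap S_k\neq\emptyset\}|$. A solution $\mathcal{B}$ is minimal if for any two distinct bins $A,B\in\mathcal{B}$ there is a scenario $k$ with $\sum_{i\in A\cap S_k}s_i+\sum_{i\in B\cap S_k}s_i>1$. *)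

theory Defs
  imports Complex_Main "HOL-Library.Disjoint_Sets"
begin

definition bpps_instance :: "nat \<Rightarrow> 'a set \<Rightarrow> ('a \<Rightarrow> rat) \<Rightarrow> ('a \<Rightarrow> nat set) \<Rightarrow> bool" where
  "bpps_instance d I s K \<longleftrightarrow> finite I \<and>
     (\<forall>i\<in>I. 0 \<le> s i \<and> K i \<subseteq> {1..d} \<and> K i \<noteq> {})"

definition scen :: "'a set \<Rightarrow> ('a \<Rightarrow> nat set) \<Rightarrow> nat \<Rightarrow> 'a set" where
  "scen I K k = {i\<in>I. k \<in> K i}"

definition bpps_solution :: "nat \<Rightarrow> 'a set \<Rightarrow> ('a \<Rightarrow> rat) \<Rightarrow> ('a \<Rightarrow> nat set) \<Rightarrow> 'a set set \<Rightarrow> bool" where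
  "bpps_solution d I s K \<B> \<longleftrightarrow> partition_on I \<B> \<and>
     (\<forall>B\<in>\<B>. \<forall>k\<in>{1..d}. (\<Sum>i\<in>B \<inter> scen I K k. s i) \<le> 1)"

definition val_bpps :: "nat \<Rightarrow> 'a set \<Rightarrow> ('a \<Rightarrow> nat set) \<Rightarrow> 'a set set \<Rightarrow> nat" where
  "val_bpps d I K \<B> = Max ((\<lambda>k. card {B\<in>\<B>. B \<inter> scen I K k \<noteq> {}}) ` {1..d})"

definition val_vbpp :: "'a set set \<Rightarrow> nat" where
  "val_vbpp \<B> = card \<B>"

definition bpps_minimal :: "nat \<Rightarrow> 'a set \<Rightarrow> ('a \<Rightarrow> rat) \<Rightarrow> ('a \<Rightarrow> nat set) \<Rightarrow> 'a set set \<Rightarrow> bool" where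
  "bpps_minimal d I s K \<B> \<longleftrightarrow> bpps_solution d I s K \<B> \<and>
     (\<forall>A\<in>\<B>. \<forall>B\<in>\<B>. A \<noteq> B \<longrightarrow>
        (\<exists>k\<in>{1..d}. (\<Sum>i\<in>A \<inter> scen I K k. s i) + (\<Sum>i\<in>B \<inter> scen I K k. s i) > 1))"

end

theory Submission
  imports Defs
begin

theorem theorem1:
  fixes d :: nat and I :: "'a set" and s :: "'a \<Rightarrow> rat" and K :: "'a \<Rightarrow> nat set"
    and \<B> :: "'a set set"
  assumes "bpps_instance d I s K"
    and "bpps_minimal d I s K \<B>"
  shows "real (val_vbpp \<B>) \<le> sqrt (real d) * real (val_bpps d I K \<B>)"
proof -
  have fI: "finite I" and inst: "\<forall>i\<in>I. 0 \<le> s i \<and> K i \<subseteq> {1..d} \<and> K i \<noteq> {}"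
    using assms(1) unfolding bpps_instance_def by auto
  have part: "partition_on I \<B>" and cap: "\<forall>B\<in>\<B>. \<forall>k\<in>{1..d}. (\<Sum>i\<in>B \<inter> scen I K k. s i) \<le> 1"
    and mini: "\<forall>A\<in>\<B>. \<forall>B\<in>\<B>. A \<noteq> B \<longrightarrow>
        (\<exists>k\<in>{1..d}. (\<Sum>i\<in>A \<inter> scen I K k. s i) + (\<Sum>i\<in>B \<inter> scen I K k. s i) > 1)"
    using assms(2) unfolding bpps_minimal_def bpps_solution_def by auto
  have sub: "\<And>B. B \<in> \<B> \<Longrightarrow> B \<subseteq> I" using part by (auto simp: partition_on_def)
  have fB: "finite \<B>"
    proof - have "\<B> \<subseteq> Pow I" using sub by auto then show ?thesis using fI by (metis finite_Pow_iff finite_subset) qed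
  define T where "T k = {B\<in>\<B>. B \<inter> scen I K k \<noteq> {}}" for k
  define V where "V = val_bpps d I K \<B>"
  have key: "\<exists>k\<in>{1..d}. A \<in> T k \<and> B \<in> T k" if A: "A \<in> \<B>" and B: "B \<in> \<B>" for A B
  proof (cases "A = B")
    case True
    have "A \<noteq> {}" using part A by (auto simp: partition_on_def)
    then obtain i where "i \<in> A" by auto
    then have "i \<in> I" using sub A by auto
    then obtain k where "k \<in> K i" "k \<in> {1..d}" using inst by blast
    then show ?thesis using True A \<open>i \<in> A\<close> \<open>i \<in> I\<close> unfolding T_def scen_def by blast
  next
    case False
    then obtain k where k: "k \<in> {1..d}"
      and gt: "(\<Sum>i\<in>A \<inter> scen I K k. s i) + (\<Sum>i\<in>B \<inter> scen I K k. s i) > 1"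
      using mini A B by blast
    have cA: "(\<Sum>i\<in>A \<inter> scen I K k. s i) \<le> 1" and cB: "(\<Sum>i\<in>B \<inter> scen I K k. s i) \<le> 1"
      using cap A B k by auto
    have "A \<inter> scen I K k \<noteq> {}" using gt cB by auto
    moreover have "B \<inter> scen I K k \<noteq> {}" using gt cA by auto
    ultimately show ?thesis using k A B unfolding T_def by blast
  qed
  have "\<B> \<times> \<B> \<subseteq> (\<Union>k\<in>{1..d}. T k \<times> T k)" using key by blast
  then have "card (\<B> \<times> \<B>) \<le> card (\<Union>k\<in>{1..d}. T k \<times> T k)"
    by (intro card_mono) (auto simp: T_def fB)
  also have "\<dots> \<le> (\<Sum>k\<in>{1..d}. card (T k \<times> T k))" by (rule card_UN_le) simp
  also have "\<dots> \<le> (\<Sum>k\<in>{1..d}. V * V)"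
  proof (rule sum_mono)
    fix k assume k: "k \<in> {1..d}"
    have "card (T k) \<le> V" unfolding V_def val_bpps_def T_def
      using k by (intro Max_ge) auto
    then show "card (T k \<times> T k) \<le> V * V" by (simp add: card_cartesian_product mult_le_mono)
  qed
  finally have ineq: "card \<B> * card \<B> \<le> d * (V * V)" by (simp add: card_cartesian_product)
  then have r: "real (card \<B>) * real (card \<B>) \<le> real d * (real V * real V)"
    by (metis of_nat_le_iff of_nat_mult)
  have "(sqrt (real d) * real V) ^ 2 = real d * (real V * real V)"
    by (simp add: power_mult_distrib power2_eq_square)
  then have "real (card \<B>) ^ 2 \<le> (sqrt (real d) * real V) ^ 2"
    using r by (simp only: power2_eq_square)
  then have "real (card \<B>) \<le> sqrt (real d) * real V"
    by (rule power2_le_imp_le) simp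
  then show ?thesis unfolding val_vbpp_def V_def .
qed

end
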